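(* Let $\ell,d$ be positive integers and $p=p_1\cdots p_\ell\in\mathbb{Z}_d^\ell$. The descending dipaths of the cyclic permutation routing $R(p_1\cdots p_\ell)$ in $\mathcal{B}(\ell,d)$ are pairwise arc-disjoint: no arc of $\mathcal{B}(\ell,d)$ is contained in two of them.
   Context: The BCube $\mathcal{B}(\ell,d)$ ($\ell,d$ positive integers) is the symmetric digraph defined as follows, with $\mathbb{Z}_d=\{0,1,\dots,d-1\}$. - Hosts: all vectors $\mathbf{h}=h_1\cdots h_\ell\in\mathbb{Z}_d^{\ell}$. - Switches: for each layer $k\in\{1,\dots,\ell\}$, one switch $\mathbf{s}^k$ for each vector $s^k_1\cdots s^k_{\ell-1}\in\mathbb{Z}_d^{\ell-1}$. - Links: host $\mathbf{h}$ and layer-$k$ switch $\mathbf{s}^k$ are joined if and only if $s^k_1\cdots s^k_{\ell-1}=h_1\cdots h_{k-1}h_{k+1}\cdots h_\ell$. Each such link gives an uplink arc (host $\to$ switch) and a downlink arc (switch $\to$ host) at layer $k$. Descending dipath: let $\mathbf{h}^s\neq\mathbf{h}^d$ be hosts, and let $i_1>\dots>i_m$ be the coordinates in which they differ. Define $\mathbf{h}^0=\mathbf{h}^s$, and let $\mathbf{h}^j$ be $\mathbf{h}^{j-1}$ with its $i_j$-th coordinate replaced by $h^d_{i_j}$. The descending dipath goes, for each $j=1,\dots,m$, from $\mathbf{h}^{j-1}$ through the unique layer-$i_j$ switch adjacent to both $\mathbf{h}^{j-1}$ and $\mathbf{h}^j$, to $\mathbf{h}^j$. When $\mathbf{h}^s=\mathbf{h}^d$,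 the dipath is the trivial path with no arcs. For $p\in\mathbb{Z}_d^\ell$, the permutation $P(p)$ is the set of pairs $(\mathbf{h}^s,\mathbf{h}^d)$ with $\mathbf{h}^s\in\mathbb{Z}_d^\ell$ and $h^d_i=(h^s_i+p_i)\bmod d$ for all $i$. The cyclic permutation routing $R(p)$ is the set of descending dipaths $P_{\mathbf{h}^s,\mathbf{h}^d}$ for $(\mathbf{h}^s,\mathbf{h}^d)\in P(p)$. *)

theory Defs
  imports Main
begin

text \<open>Hosts of B(l,d): lists h of length l with entries < d; coordinate i (1-based)
  is h ! (i - 1).  A layer-k switch is a pair (k, s) with s a list of length l-1.\<close>

type_synonym host = "nat list"
type_synonym switch = "nat \<times> nat list"

definition hosts :: "nat \<Rightarrow> nat \<Rightarrow> host set" where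
  "hosts l d = {h. length h = l \<and> (\<forall>x\<in>set h. x < d)}"

definition switches :: "nat \<Rightarrow> nat \<Rightarrow> switch set" where
  "switches l d = {(k, s). k \<in> {1..l} \<and> length s = l - 1 \<and> (\<forall>x\<in>set s. x < d)}"

definition delcoord :: "nat \<Rightarrow> host \<Rightarrow> nat list" where
  "delcoord k h = take (k - 1) h @ drop k h"

definition linked :: "nat \<Rightarrow> nat \<Rightarrow> host \<Rightarrow> switch \<Rightarrow> bool" where
  "linked l d h sw \<longleftrightarrow> h \<in> hosts l d \<and> sw \<in> switches l d \<and> snd sw = delcoord (fst sw) h"

datatype arc = Up host switch | Down switch host

definition arcs :: "nat \<Rightarrow> nat \<Rightarrow> arc set" where
  "arcs l d = {Up h sw | h sw. linked l d h sw} \<union> {Down sw h | h sw. linked l d h sw}"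

definition diffcoords :: "host \<Rightarrow> host \<Rightarrow> nat list" where
  "diffcoords hs ht = rev (filter (\<lambda>i. hs ! (i - 1) \<noteq> ht ! (i - 1)) [1..<length hs + 1])"

fun walk :: "host \<Rightarrow> host \<Rightarrow> nat list \<Rightarrow> arc list" where
  "walk ht h [] = []"
| "walk ht h (i # is) =
     (let h' = h[i - 1 := ht ! (i - 1)]
      in Up h (i, delcoord i h) # Down (i, delcoord i h) h' # walk ht h' is)"

definition desc_path :: "host \<Rightarrow> host \<Rightarrow> arc list" where
  "desc_path hs ht = walk ht hs (diffcoords hs ht)"

definition cyc_dest :: "nat \<Rightarrow> nat list \<Rightarrow> host \<Rightarrow> host" where
  "cyc_dest d p hs = map2 (\<lambda>x q. (x + q) mod d) hs p"

end

theory Submission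
  imports Defs
begin

definition upd :: "host \<Rightarrow> host \<Rightarrow> nat list \<Rightarrow> host" where
  "upd t h js = fold (\<lambda>i h. h[i - 1 := t ! (i - 1)]) js h"

lemma upd_Cons: "upd t h (i # js) = upd t (h[i - 1 := t ! (i - 1)]) js"
  by (simp add: upd_def)

lemma upd_length: "length (upd t h js) = length h"
  by (induction js arbitrary: h) (auto simp: upd_def)

lemma upd_nth:
  "\<forall>i\<in>set js. 1 \<le> i \<Longrightarrow> m < length h \<Longrightarrow>
   upd t h js ! m = (if Suc m \<in> set js then t ! m else h ! m)"
proof (induction js arbitrary: h)
  case Nil then show ?case by (simp add: upd_def)
next
  case (Cons i js)
  have "upd t h (i # js) ! m = upd t (h[i - 1 := t ! (i - 1)]) js ! m" by (simp add: upd_Cons)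
  also have "\<dots> = (if Suc m \<in> set js then t ! m else h[i - 1 := t ! (i - 1)] ! m)"
    using Cons by simp
  also have "\<dots> = (if Suc m \<in> set (i # js) then t ! m else h ! m)"
    using Cons.prems Cons.prems(1) by (auto simp: nth_list_update)
  finally show ?case .
qed

lemma walk_set:
  "a \<in> set (walk t h is) \<Longrightarrow> \<exists>k<length is.
     a = Up (upd t h (take k is)) (is ! k, delcoord (is ! k) (upd t h (take k is)))
   \<or> a = Down (is ! k, delcoord (is ! k) (upd t h (take k is))) (upd t h (take (Suc k) is))"
proof (induction "is" arbitrary: h)
  case Nil then show ?case by simp
next
  case (Cons i js)
  let ?h' = "h[i - 1 := t ! (i - 1)]"
  from Cons.prems have "a = Up h (i, delcoord i h) \<or> a = Down (i, delcoord i h) ?h'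
      \<or> a \<in> set (walk t ?h' js)" by (simp add: Let_def)
  then show ?case
  proof (elim disjE)
    assume "a = Up h (i, delcoord i h)"
    then show ?thesis by (intro exI[of _ 0]) (simp add: upd_def)
  next
    assume "a = Down (i, delcoord i h) ?h'"
    then show ?thesis by (intro exI[of _ 0]) (simp add: upd_def)
  next
    assume "a \<in> set (walk t ?h' js)"
    from Cons.IH[OF this] obtain k where "k < length js" and
      "a = Up (upd t ?h' (take k js)) (js ! k, delcoord (js ! k) (upd t ?h' (take k js)))
   \<or> a = Down (js ! k, delcoord (js ! k) (upd t ?h' (take k js))) (upd t ?h' (take (Suc k) js))"
      by blast
    then show ?thesis by (intro exI[of _ "Suc k"]) (simp add: upd_Cons)
  qed
qed

lemma mod_cancel_lt:
  fixes a b c d :: nat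
  assumes "a < d" "b < d" "(a + c) mod d = (b + c) mod d"
  shows "a = b"
proof -
  have "(a + c + (d - c mod d)) mod d = (b + c + (d - c mod d)) mod d"
  proof -
    have "(a + c + (d - c mod d)) mod d = ((a + c) mod d + (d - c mod d)) mod d"
      by (simp only: mod_add_left_eq)
    also have "\<dots> = ((b + c) mod d + (d - c mod d)) mod d" using assms(3) by (simp only:)
    also have "\<dots> = (b + c + (d - c mod d)) mod d" by (simp only: mod_add_left_eq)
    finally show ?thesis .
  qed
  moreover have "\<And>x. (x + c + (d - c mod d)) mod d = x mod d"
  proof -
    fix x
    have d0: "d > 0" using assms(1) by simp
    have r: "c mod d < d" using d0 by simp
    have c: "c = d * (c div d) + c mod d" by simp
    have "x + c + (d - c mod d) = x + d * (c div d) + d"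
      using c r by linarith
    then have "x + c + (d - c mod d) = x + d * (c div d + 1)" by (simp only: distrib_left mult_1_right add.assoc)
    then show "(x + c + (d - c mod d)) mod d = x mod d" by (simp only: mod_mult_self2)
  qed
  ultimately show ?thesis using assms by simp
qed

lemma cyc_nth: "m < length h \<Longrightarrow> m < length p \<Longrightarrow> cyc_dest d p h ! m = (h ! m + p ! m) mod d"
  by (simp add: cyc_dest_def)

lemma diff_eq:
  assumes "h \<in> hosts l d" "p \<in> hosts l d"
  shows "diffcoords h (cyc_dest d p h) = rev (filter (\<lambda>i. p ! (i - 1) \<noteq> 0) [1..<l + 1])"
proof -
  have "\<And>i. i \<in> set [1..<l+1] \<Longrightarrow>
    (h ! (i - 1) \<noteq> cyc_dest d p h ! (i - 1)) = (p ! (i - 1) \<noteq> 0)"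
  proof -
    fix i assume "i \<in> set [1..<l+1]"
    then have i: "i - 1 < l" by auto
    have hl: "h ! (i - 1) < d" "p ! (i - 1) < d" using assms i by (auto simp: hosts_def)
    have "cyc_dest d p h ! (i - 1) = (h ! (i - 1) + p ! (i - 1)) mod d"
      using assms i by (auto simp: hosts_def cyc_nth)
    moreover have "(h ! (i - 1) + p ! (i - 1)) mod d = h ! (i - 1) \<longleftrightarrow> p ! (i - 1) = 0"
    proof
      assume "(h ! (i - 1) + p ! (i - 1)) mod d = h ! (i - 1)"
      then have "(h ! (i - 1) + p ! (i - 1)) mod d = (h ! (i - 1) + 0) mod d" using hl by simp
      then have "(p ! (i - 1) + h ! (i - 1)) mod d = (0 + h ! (i - 1)) mod d" by (simp only: add.commute[of "p ! (i - 1)"] add.commute[of 0])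
      then show "p ! (i - 1) = 0" by (rule mod_cancel_lt[OF hl(2), rotated]) (use hl in simp)
    qed (use hl in simp)
    ultimately show "(h ! (i - 1) \<noteq> cyc_dest d p h ! (i - 1)) = (p ! (i - 1) \<noteq> 0)" by auto
  qed
  then have "filter (\<lambda>i. h ! (i - 1) \<noteq> cyc_dest d p h ! (i - 1)) [1..<l + 1]
      = filter (\<lambda>i. p ! (i - 1) \<noteq> 0) [1..<l + 1]"
    by (intro filter_cong) simp_all
  moreover have "length h = l" using assms(1) by (simp add: hosts_def)
  ultimately show ?thesis unfolding diffcoords_def by simp
qed

theorem lemma3:
  fixes l d :: nat and p :: "nat list"
  assumes "l > 0" and "d > 0" and "p \<in> hosts l d"
  shows "\<forall>h1\<in>hosts l d. \<forall>h2\<in>hosts l d. \<forall>a\<in>arcs l d.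
           h1 \<noteq> h2 \<longrightarrow> a \<in> set (desc_path h1 (cyc_dest d p h1))
             \<longrightarrow> a \<notin> set (desc_path h2 (cyc_dest d p h2))"
proof (intro ballI impI)
  fix h1 h2 a
  assume h1: "h1 \<in> hosts l d" and h2: "h2 \<in> hosts l d" and ne: "h1 \<noteq> h2"
    and a1: "a \<in> set (desc_path h1 (cyc_dest d p h1))"
  show "a \<notin> set (desc_path h2 (cyc_dest d p h2))"
  proof
    assume a2: "a \<in> set (desc_path h2 (cyc_dest d p h2))"
    define "is" where "is = rev (filter (\<lambda>i. p ! (i - 1) \<noteq> 0) [1..<l + 1])"
    have dist: "distinct is" unfolding is_def by simp
    have pos: "\<forall>i\<in>set js. 1 \<le> i" if "set js \<subseteq> set is" for js
      using that unfolding is_def by auto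
    define t1 where "t1 = cyc_dest d p h1"
    define t2 where "t2 = cyc_dest d p h2"
    have len: "length h1 = l" "length h2 = l" "length p = l" using h1 h2 assms(3)
      by (auto simp: hosts_def)
    have lt: "\<And>m. m < l \<Longrightarrow> h1 ! m < d \<and> h2 ! m < d \<and> p ! m < d"
      using h1 h2 assms(3) by (auto simp: hosts_def)
    have inj: "h1 = h2" if eq: "upd t1 h1 js = upd t2 h2 js" and sub: "set js \<subseteq> set is" for js
    proof (rule nth_equalityI)
      show "length h1 = length h2" using len by simp
      fix m assume m: "m < length h1"
      have e: "upd t1 h1 js ! m = upd t2 h2 js ! m" using eq by simp
      show "h1 ! m = h2 ! m"
      proof (cases "Suc m \<in> set js")
        case True
        then have "t1 ! m = t2 ! m" using e upd_nth[OF pos[OF sub]] m len by simp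
        then have "(h1 ! m + p ! m) mod d = (h2 ! m + p ! m) mod d"
          using m len unfolding t1_def t2_def by (simp add: cyc_nth)
        then show ?thesis by (rule mod_cancel_lt[rotated 2]) (use lt m len in auto)
      next
        case False
        then show ?thesis using e upd_nth[OF pos[OF sub]] m len by simp
      qed
    qed
    have sub: "set (take k is) \<subseteq> set is" for k by (rule set_take_subset)
    from a1 obtain k where k: "k < length is" and
      A1: "a = Up (upd t1 h1 (take k is)) (is ! k, delcoord (is ! k) (upd t1 h1 (take k is)))
   \<or> a = Down (is ! k, delcoord (is ! k) (upd t1 h1 (take k is))) (upd t1 h1 (take (Suc k) is))"
    proof -
      have "a \<in> set (walk t1 h1 is)" using a1 diff_eq[OF h1 assms(3)]
        unfolding desc_path_def is_def t1_def by simp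
      from walk_set[OF this] show ?thesis using that by blast
    qed
    from a2 obtain k' where k': "k' < length is" and
      A2: "a = Up (upd t2 h2 (take k' is)) (is ! k', delcoord (is ! k') (upd t2 h2 (take k' is)))
   \<or> a = Down (is ! k', delcoord (is ! k') (upd t2 h2 (take k' is))) (upd t2 h2 (take (Suc k') is))"
    proof -
      have "a \<in> set (walk t2 h2 is)" using a2 diff_eq[OF h2 assms(3)]
        unfolding desc_path_def is_def t2_def by simp
      from walk_set[OF this] show ?thesis using that by blast
    qed
    have kk: "k = k'" if "is ! k = is ! k'" using that dist k k' nth_eq_iff_index_eq by blast
    from A1 A2 show False
    proof (elim disjE)
      assume "a = Up (upd t1 h1 (take k is)) (is ! k, delcoord (is ! k) (upd t1 h1 (take k is)))"
        "a = Up (upd t2 h2 (take k' is)) (is ! k', delcoord (is ! k') (upd t2 h2 (take k' is)))"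
      then have "upd t1 h1 (take k is) = upd t2 h2 (take k is)" using kk by auto
      then show False using inj[OF _ sub] ne by blast
    next
      assume "a = Down (is ! k, delcoord (is ! k) (upd t1 h1 (take k is))) (upd t1 h1 (take (Suc k) is))"
        "a = Down (is ! k', delcoord (is ! k') (upd t2 h2 (take k' is))) (upd t2 h2 (take (Suc k') is))"
      then have "upd t1 h1 (take (Suc k) is) = upd t2 h2 (take (Suc k) is)" using kk by auto
      then show False using inj[OF _ sub] ne by blast
    qed auto
  qed
qed

end
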